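(* Let $X$ be a real Banach space with a normalized Schauder basis $\mathcal B=(e_n)_{n=1}^\infty$ with biorthogonal functionals $(e_n^* )$, and let $\mathcal E=(\varepsilon_n)_{n=1}^\infty$ be a sequence of nonnegative numbers such that the brick $K=K_{\mathcal B,\mathcal E}$ is compact. Then $r^{\rm ext}(K)$, $r^{\rm unc}(K)$ and $\sup_{x\in K}\|x\|$ are all finite and equal.
   Context: The brick is $K_{\mathcal B,\mathcal E}=\{x\in X:\ |e_n^*(x)|\le\varepsilon_n \text{ for all } n\}$. A point $x_0\in A$ is an extreme point of $A$ if for every nonzero $x\in X$ there is $\lambda\in[-1,1]$ with $x_0+\lambda x\notin A$. The extreme radius $r^{\rm ext}(K)$ is the supremum of $\|x_0\|$ over extreme points of $K$ if one exists, and $\infty$ otherwise. The unconditional radius is $r^{\rm unc}(K)=\sup_{\theta_n=\pm1}\|\sum_{n=1}^\infty\theta_n\varepsilon_ne_n\|$, with the norm of a divergent series equal to $\infty$. *)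

theory Defs
  imports "HOL-Analysis.Analysis"
begin

text \<open>Schauder basis of a real Banach space: every x has a unique expansion
  x = sum_n c_n e_n (norm-convergent series). Indexing starts at 0.\<close>
definition schauder_basis :: "(nat \<Rightarrow> 'a::banach) \<Rightarrow> bool" where
  "schauder_basis e \<longleftrightarrow> (\<forall>x. \<exists>!c::nat \<Rightarrow> real. (\<lambda>n. c n *\<^sub>R e n) sums x)"

definition coord :: "(nat \<Rightarrow> 'a::banach) \<Rightarrow> nat \<Rightarrow> 'a \<Rightarrow> real" where
  "coord e n x = (THE c::nat \<Rightarrow> real. (\<lambda>k. c k *\<^sub>R e k) sums x) n"

definition brick :: "(nat \<Rightarrow> 'a::banach) \<Rightarrow> (nat \<Rightarrow> real) \<Rightarrow> 'a set" where
  "brick e eps = {x. \<forall>n. \<bar>coord e n x\<bar> \<le> eps n}"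

definition extreme_pt :: "'a::real_vector set \<Rightarrow> 'a \<Rightarrow> bool" where
  "extreme_pt A x0 \<longleftrightarrow> x0 \<in> A \<and>
     (\<forall>x. x \<noteq> 0 \<longrightarrow> (\<exists>l::real. l \<in> {-1..1} \<and> x0 + l *\<^sub>R x \<notin> A))"

definition r_ext :: "'a::real_normed_vector set \<Rightarrow> ereal" where
  "r_ext A = (if \<exists>x. extreme_pt A x
              then (SUP x\<in>{x. extreme_pt A x}. ereal (norm x)) else \<infinity>)"

definition r_unc :: "(nat \<Rightarrow> 'a::banach) \<Rightarrow> (nat \<Rightarrow> real) \<Rightarrow> ereal" where
  "r_unc e eps = (SUP \<theta>\<in>{\<theta>::nat \<Rightarrow> real. \<forall>n. \<theta> n = 1 \<or> \<theta> n = -1}.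
      (if summable (\<lambda>n. (\<theta> n * eps n) *\<^sub>R e n)
       then ereal (norm (\<Sum>n. (\<theta> n * eps n) *\<^sub>R e n)) else \<infinity>))"

end

theory Submission
  imports Defs
begin

lemma coord_sums:
  assumes "schauder_basis e" shows "(\<lambda>k. coord e k x *\<^sub>R e k) sums x"
proof -
  from assms have "\<exists>!c. (\<lambda>n. c n *\<^sub>R e n) sums x" unfolding schauder_basis_def by blast
  hence "(\<lambda>n. (THE c. (\<lambda>k. c k *\<^sub>R e k) sums x) n *\<^sub>R e n) sums x" by (rule theI')
  thus ?thesis unfolding coord_def .
qed

lemma coord_eq:
  assumes "schauder_basis e" "(\<lambda>k. c k *\<^sub>R e k) sums x" shows "coord e n x = c n"
proof -
  from assms have "\<exists>!c. (\<lambda>n. c n *\<^sub>R e n) sums x" unfolding schauder_basis_def by blast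
  from the1_equality[of "\<lambda>c. (\<lambda>k. c k *\<^sub>R e k) sums x", OF this assms(2)] have "(THE c. (\<lambda>k. c k *\<^sub>R e k) sums x) = c" .
  thus ?thesis unfolding coord_def by simp
qed

lemma coord_finite:
  assumes "schauder_basis e" "finite F"
  shows "coord e n (\<Sum>k\<in>F. c k *\<^sub>R e k) = (if n \<in> F then c n else 0)"
proof -
  have "(\<lambda>k. (if k \<in> F then c k else 0) *\<^sub>R e k) sums (\<Sum>k\<in>F. c k *\<^sub>R e k)"
  proof -
    have "(\<lambda>k. (if k \<in> F then c k else 0) *\<^sub>R e k) = (\<lambda>r. if r \<in> F then c r *\<^sub>R e r else 0)"
      by auto
    with sums_If_finite_set[OF assms(2), of "\<lambda>k. c k *\<^sub>R e k"] show ?thesis by simp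
  qed
  from coord_eq[OF assms(1) this] show ?thesis .
qed

lemma coord_lin:
  assumes "schauder_basis e"
  shows "coord e n (x + l *\<^sub>R y) = coord e n x + l * coord e n y"
proof -
  have "(\<lambda>k. (coord e k x + l * coord e k y) *\<^sub>R e k) sums (x + l *\<^sub>R y)"
    using sums_add[OF coord_sums[OF assms, of x] sums_scaleR_right[OF coord_sums[OF assms, of y], of l]]
    by (simp add: algebra_simps)
  from coord_eq[OF assms this] show ?thesis .
qed

lemma coord_basis:
  assumes "schauder_basis e"
  shows "coord e n (e m) = (if n = m then 1 else 0)"
  using coord_finite[OF assms, of "{m}" n "\<lambda>_. 1"] by auto

lemma coord_zero:
  assumes "schauder_basis e" "\<forall>n. coord e n x = 0" shows "x = 0"
proof -
  have "(\<lambda>k. 0) sums x" using coord_sums[OF assms(1), of x] assms(2) by simp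
  thus ?thesis using sums_zero sums_unique2 by blast
qed

lemma fin_in_brick:
  assumes "schauder_basis e" "finite F" "\<forall>n\<in>F. \<bar>c n\<bar> \<le> eps n" "\<forall>n. eps n \<ge> 0"
  shows "(\<Sum>n\<in>F. c n *\<^sub>R e n) \<in> brick e eps"
  unfolding brick_def using coord_finite[OF assms(1,2)] assms(3,4) by auto

lemma series_summable:
  fixes e :: "nat \<Rightarrow> 'a::banach"
  assumes B: "schauder_basis e" and eps0: "\<forall>n. eps n \<ge> 0"
    and cpt: "compact (brick e eps)" and c: "\<forall>n. \<bar>c n\<bar> \<le> eps n"
  shows "summable (\<lambda>n. c n *\<^sub>R e n)"
proof (rule ccontr)
  define f where "f = (\<lambda>n. c n *\<^sub>R e n)"
  assume "\<not> summable (\<lambda>n. c n *\<^sub>R e n)"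
  then have ns: "\<not> summable f" by (simp add: f_def)
  obtain R where R: "\<forall>x\<in>brick e eps. norm x \<le> R"
    using compact_imp_bounded[OF cpt] bounded_iff by auto
  have fin: "sum f F \<in> brick e eps" if "finite F" for F
    unfolding f_def using fin_in_brick[OF B that _ eps0, of c] c by auto
  from ns obtain \<delta> where \<delta>: "\<delta> > 0" "\<forall>N. \<exists>m\<ge>N. \<exists>n. norm (sum f {m..<n}) \<ge> \<delta>"
    unfolding summable_Cauchy by (auto simp: not_less)
  then obtain mm nn where mn: "\<And>N. mm N \<ge> N \<and> norm (sum f {mm N..<nn N}) \<ge> \<delta>" by metis
  have lt: "mm N < nn N" for N
  proof (rule ccontr)
    assume "\<not> mm N < nn N"
    then have "{mm N..<nn N} = {}" by auto
    with mn[of N] \<delta>(1) show False by auto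
  qed
  define t where "t k = (nn ^^ k) (0::nat)" for k
  have tS: "t (Suc k) = nn (t k)" for k by (simp add: t_def)
  define blk where "blk k = {mm (t k)..<nn (t k)}" for k
  define u where "u k = sum f (blk k)" for k
  have tmono: "strict_mono t"
    unfolding strict_mono_Suc_iff using tS mn lt by (metis le_less_trans)
  have blk_sub: "blk k \<subseteq> {t k..<t (Suc k)}" for k
    unfolding blk_def tS using mn[of "t k"] by auto
  have disj: "blk k \<inter> blk k' = {}" if "k \<noteq> k'" for k k'
  proof (cases "k < k'")
    case True
    then have "t (Suc k) \<le> t k'" using tmono strict_mono_less_eq by (metis Suc_leI)
    then show ?thesis using blk_sub[of k] blk_sub[of k'] by (force simp: subset_iff)
  next
    case False
    then have "k' < k" using that by simp
    then have "t (Suc k') \<le> t k" using tmono strict_mono_less_eq by (metis Suc_leI)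
    then show ?thesis using blk_sub[of k] blk_sub[of k'] by (force simp: subset_iff)
  qed
  have finb: "finite (blk k)" for k by (simp add: blk_def)
  have unorm: "norm (u k) \<ge> \<delta>" for k unfolding u_def blk_def using mn by blast
  have uK: "u k \<in> brick e eps" for k unfolding u_def blk_def by (rule fin) simp
  obtain l r where lr: "l \<in> brick e eps" "strict_mono r" "(u \<circ> r) \<longlonglongrightarrow> l"
    using compact_imp_seq_compact[OF cpt] uK unfolding seq_compact_def by metis
  have ln: "norm l \<ge> \<delta>"
    using LIMSEQ_le_const[OF tendsto_norm[OF lr(3)], of \<delta>] unorm by auto
  obtain m :: nat where m: "R < real m * \<delta>" using ex_less_of_nat_mult[OF \<delta>(1)] by blast
  define g where "g j = (\<Sum>i<m. u (r (j+i)))" for j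
  have gK: "norm (g j) \<le> R" for j
  proof -
    have inj: "r (j+i) \<noteq> r (j+i')" if "i \<noteq> i'" for i i'
      using lr(2) that by (metis add_left_cancel strict_mono_eq)
    have "g j = sum f (\<Union>i\<in>{..<m}. blk (r (j+i)))"
      unfolding g_def u_def
      by (rule sum.UNION_disjoint[symmetric]) (auto simp: finb intro!: disj inj)
    also have "\<dots> \<in> brick e eps" by (rule fin) (auto simp: blk_def)
    finally show ?thesis using R by blast
  qed
  have "g \<longlonglongrightarrow> (\<Sum>i<m. l)"
    unfolding g_def
  proof (rule tendsto_sum)
    fix i
    show "(\<lambda>j. u (r (j + i))) \<longlonglongrightarrow> l"
      using LIMSEQ_ignore_initial_segment[OF lr(3), of i] by (simp add: o_def add.commute)
  qed
  then have "(\<lambda>j. norm (g j)) \<longlonglongrightarrow> norm (real m *\<^sub>R l)" by (intro tendsto_norm) (simp add: sum_constant_scaleR)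
  then have "norm (real m *\<^sub>R l) \<le> R" using LIMSEQ_le_const2 gK by blast
  moreover have "norm (real m *\<^sub>R l) \<ge> real m * \<delta>"
    using ln by (simp add: mult_left_mono)
  ultimately show False using m by simp
qed

lemma coord_0:
  assumes "schauder_basis e" shows "coord e n 0 = 0"
  using coord_eq[OF assms, of "\<lambda>_. 0" 0 n] by simp

lemma ext_char:
  assumes B: "schauder_basis e" and ne: "\<forall>n. norm (e n) = 1" and eps0: "\<forall>n. eps n \<ge> 0"
  shows "extreme_pt (brick e eps) x \<longleftrightarrow> x \<in> brick e eps \<and> (\<forall>n. \<bar>coord e n x\<bar> = eps n)"
proof
  assume ex: "extreme_pt (brick e eps) x"
  hence xK: "x \<in> brick e eps" unfolding extreme_pt_def by blast
  hence le: "\<bar>coord e n x\<bar> \<le> eps n" for n unfolding brick_def by blast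
  have "\<bar>coord e n x\<bar> = eps n" for n
  proof (rule ccontr)
    assume "\<bar>coord e n x\<bar> \<noteq> eps n"
    with le[of n] have lt: "\<bar>coord e n x\<bar> < eps n" by simp
    define \<delta> where "\<delta> = eps n - \<bar>coord e n x\<bar>"
    have \<delta>0: "\<delta> > 0" using lt by (simp add: \<delta>_def)
    define y where "y = (\<Sum>k\<in>{n}. \<delta> *\<^sub>R e k)"
    have cy: "coord e k y = (if k = n then \<delta> else 0)" for k
      unfolding y_def using coord_finite[OF B, of "{n}" k "\<lambda>_. \<delta>"] by simp
    have "y \<noteq> 0" using cy[of n] \<delta>0 coord_0[OF B, of n] by auto
    then obtain l where l: "l \<in> {-1..1}" "x + l *\<^sub>R y \<notin> brick e eps"
      using ex unfolding extreme_pt_def by blast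
    have "x + l *\<^sub>R y \<in> brick e eps" unfolding brick_def mem_Collect_eq
    proof (intro allI)
      fix k
      show "\<bar>coord e k (x + l *\<^sub>R y)\<bar> \<le> eps k"
      proof (cases "k = n")
        case True
        have "\<bar>l\<bar> \<le> 1" using l(1) by auto
        hence "\<bar>l * \<delta>\<bar> \<le> \<delta>" using \<delta>0 by (simp add: abs_mult mult_left_le_one_le)
        moreover have "\<bar>coord e k x + l * \<delta>\<bar> \<le> \<bar>coord e k x\<bar> + \<bar>l * \<delta>\<bar>" by (rule abs_triangle_ineq)
        ultimately show ?thesis using True by (simp add: coord_lin[OF B] cy \<delta>_def)
      next
        case False
        then show ?thesis using le[of k] by (simp add: coord_lin[OF B] cy)
      qed
    qed
    with l show False by blast
  qed
  with xK show "x \<in> brick e eps \<and> (\<forall>n. \<bar>coord e n x\<bar> = eps n)" by blast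
next
  assume H: "x \<in> brick e eps \<and> (\<forall>n. \<bar>coord e n x\<bar> = eps n)"
  show "extreme_pt (brick e eps) x" unfolding extreme_pt_def
  proof (intro conjI allI impI)
    show "x \<in> brick e eps" using H by blast
    fix y :: 'a assume "y \<noteq> 0"
    then obtain n where cn: "coord e n y \<noteq> 0" using coord_zero[OF B] by blast
    define l where "l = (if coord e n x * coord e n y \<ge> 0 then 1 else -1::real)"
    have eq: "\<bar>coord e n x + l * coord e n y\<bar> = \<bar>coord e n x\<bar> + \<bar>coord e n y\<bar>"
      unfolding l_def
      by (cases "coord e n x \<ge> 0"; cases "coord e n y \<ge> 0")
         (auto simp: zero_le_mult_iff mult_le_0_iff abs_if)
    have "\<not> \<bar>coord e n (x + l *\<^sub>R y)\<bar> \<le> eps n"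
      using eq H cn by (simp add: coord_lin[OF B])
    hence "x + l *\<^sub>R y \<notin> brick e eps" unfolding brick_def by blast
    moreover have "l \<in> {-1..1}" by (simp add: l_def)
    ultimately show "\<exists>l. l \<in> {-1..1} \<and> x + l *\<^sub>R y \<notin> brick e eps" by blast
  qed
qed

lemma cvx_bound:
  fixes e :: "nat \<Rightarrow> 'a::banach"
  assumes B: "schauder_basis e" and eps0: "\<forall>n. eps n \<ge> 0" and cpt: "compact (brick e eps)"
    and M: "\<forall>\<theta>. (\<forall>n. \<theta> n = 1 \<or> \<theta> n = -1) \<longrightarrow> norm (suminf (\<lambda>n. (\<theta> n * eps n) *\<^sub>R e n)) \<le> M"
  shows "(\<forall>n. \<bar>c n\<bar> \<le> eps n) \<Longrightarrow> (\<forall>n\<ge>N. \<bar>c n\<bar> = eps n) \<Longrightarrow> norm (suminf (\<lambda>n. c n *\<^sub>R e n)) \<le> M"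
proof (induction N arbitrary: c)
  case 0
  define \<theta> where "\<theta> n = (if c n \<ge> 0 then 1 else -1::real)" for n
  have "c n = \<theta> n * eps n" for n
  proof -
    have "\<bar>c n\<bar> = eps n" using 0(2) by simp
    then show ?thesis unfolding \<theta>_def by (cases "c n \<ge> 0") auto
  qed
  then have "(\<lambda>n. c n *\<^sub>R e n) = (\<lambda>n. (\<theta> n * eps n) *\<^sub>R e n)" by auto
  moreover have "\<forall>n. \<theta> n = 1 \<or> \<theta> n = -1" by (simp add: \<theta>_def)
  ultimately show ?case using M by metis
next
  case (Suc N)
  define cp where "cp = c(N := eps N)"
  define cm where "cm = c(N := - eps N)"
  have hp: "\<forall>n. \<bar>cp n\<bar> \<le> eps n" "\<forall>n\<ge>N. \<bar>cp n\<bar> = eps n"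
    using Suc.prems eps0 by (auto simp: cp_def Suc_le_eq)
  have hm: "\<forall>n. \<bar>cm n\<bar> \<le> eps n" "\<forall>n\<ge>N. \<bar>cm n\<bar> = eps n"
    using Suc.prems eps0 by (auto simp: cm_def Suc_le_eq)
  have Ip: "norm (suminf (\<lambda>n. cp n *\<^sub>R e n)) \<le> M" using Suc.IH hp by blast
  have Im: "norm (suminf (\<lambda>n. cm n *\<^sub>R e n)) \<le> M" using Suc.IH hm by blast
  show ?case
  proof (cases "eps N = 0")
    case True
    then have "c N = 0" using Suc.prems(1) by (metis abs_le_zero_iff)
    then have "c = cp" using True by (auto simp: cp_def)
    then show ?thesis using Ip by simp
  next
    case False
    then have ep: "eps N > 0" using eps0 by (metis less_eq_real_def)
    define a where "a = (eps N + c N) / (2 * eps N)"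
    define b where "b = (eps N - c N) / (2 * eps N)"
    have cN: "\<bar>c N\<bar> \<le> eps N" using Suc.prems(1) by blast
    have a0: "a \<ge> 0" unfolding a_def using ep cN by (auto simp: abs_le_iff)
    have b0: "b \<ge> 0" unfolding b_def using ep cN by (auto simp: abs_le_iff)
    have ab: "a + b = 1" unfolding a_def b_def using ep by (simp add: field_simps)
    have abN: "a * eps N - b * eps N = c N" unfolding a_def b_def using ep by (simp add: field_simps)
    have ceq: "c n *\<^sub>R e n = a *\<^sub>R (cp n *\<^sub>R e n) + b *\<^sub>R (cm n *\<^sub>R e n)" for n
    proof (cases "n = N")
      case True
      have "a *\<^sub>R (eps N *\<^sub>R e N) + b *\<^sub>R (- eps N *\<^sub>R e N) = (a*eps N - b*eps N) *\<^sub>R e N"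
        by (simp add: algebra_simps)
      then show ?thesis using True abN by (simp add: cp_def cm_def)
    next
      case False
      have "c n *\<^sub>R e n = (a + b) *\<^sub>R (c n *\<^sub>R e n)" using ab by simp
      also have "\<dots> = a *\<^sub>R (c n *\<^sub>R e n) + b *\<^sub>R (c n *\<^sub>R e n)" by (rule scaleR_add_left)
      moreover have "cp n = c n" "cm n = c n" using False by (auto simp: cp_def cm_def)
      ultimately show ?thesis by (simp only:)
    qed
    have sp: "summable (\<lambda>n. cp n *\<^sub>R e n)" by (rule series_summable[OF B eps0 cpt hp(1)])
    have sm: "summable (\<lambda>n. cm n *\<^sub>R e n)" by (rule series_summable[OF B eps0 cpt hm(1)])
    have "(\<lambda>n. a *\<^sub>R (cp n *\<^sub>R e n) + b *\<^sub>R (cm n *\<^sub>R e n)) sums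
          (a *\<^sub>R suminf (\<lambda>n. cp n *\<^sub>R e n) + b *\<^sub>R suminf (\<lambda>n. cm n *\<^sub>R e n))"
      by (intro sums_add sums_scaleR_right summable_sums sp sm)
    then have "suminf (\<lambda>n. c n *\<^sub>R e n) =
          a *\<^sub>R suminf (\<lambda>n. cp n *\<^sub>R e n) + b *\<^sub>R suminf (\<lambda>n. cm n *\<^sub>R e n)"
      unfolding ceq[symmetric] by (rule sums_unique[symmetric])
    also have "norm \<dots> \<le> a * norm (suminf (\<lambda>n. cp n *\<^sub>R e n)) + b * norm (suminf (\<lambda>n. cm n *\<^sub>R e n))"
      using a0 b0 by (metis (no_types, lifting) abs_of_nonneg norm_scaleR norm_triangle_ineq)
    also have "\<dots> \<le> a * M + b * M"
      using a0 b0 Ip Im by (intro add_mono mult_left_mono) auto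
    also have "\<dots> = (a + b) * M" by (simp add: distrib_right)
    also have "\<dots> = M" using ab by simp
    finally show ?thesis .
  qed
qed

theorem corollary3p8:
  fixes e :: "nat \<Rightarrow> 'a::banach" and eps :: "nat \<Rightarrow> real"
  assumes "schauder_basis e"
    and "\<forall>n. norm (e n) = 1"
    and "\<forall>n. eps n \<ge> 0"
    and "compact (brick e eps)"
  shows "\<exists>r::real. r_ext (brick e eps) = ereal r \<and> r_unc e eps = ereal r
           \<and> (SUP x\<in>brick e eps. ereal (norm x)) = ereal r"
proof -
  note B = assms(1) and ne = assms(2) and eps0 = assms(3) and cpt = assms(4)
  define K where "K = brick e eps"
  define S where "S = {\<theta>::nat\<Rightarrow>real. \<forall>n. \<theta> n = 1 \<or> \<theta> n = -1}"
  define sig where "sig \<theta> = suminf (\<lambda>n. (\<theta> n * eps n) *\<^sub>R e n)" for \<theta>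
  have absth: "\<bar>\<theta> n * eps n\<bar> = eps n" if "\<theta> \<in> S" for \<theta> n
  proof -
    have "\<theta> n = 1 \<or> \<theta> n = -1" using that by (simp add: S_def)
    then show ?thesis using eps0 by auto
  qed
  have summ: "summable (\<lambda>n. (\<theta> n * eps n) *\<^sub>R e n)" if "\<theta> \<in> S" for \<theta>
    by (rule series_summable[OF B eps0 cpt]) (use absth[OF that] in simp)
  have csig: "coord e n (sig \<theta>) = \<theta> n * eps n" if "\<theta> \<in> S" for \<theta> n
    unfolding sig_def by (rule coord_eq[OF B summable_sums[OF summ[OF that]]])
  have sigK: "sig \<theta> \<in> K" if "\<theta> \<in> S" for \<theta>
    unfolding K_def brick_def using csig[OF that] absth[OF that] by simp
  have extset: "{x. extreme_pt K x} = sig ` S"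
  proof
    show "{x. extreme_pt K x} \<subseteq> sig ` S"
    proof
      fix x assume "x \<in> {x. extreme_pt K x}"
      then have hx: "\<forall>n. \<bar>coord e n x\<bar> = eps n" using ext_char[OF B ne eps0] unfolding K_def by blast
      define \<theta> where "\<theta> n = (if coord e n x \<ge> 0 then 1 else -1::real)" for n
      have th: "\<theta> \<in> S" by (auto simp: S_def \<theta>_def)
      have "\<theta> n * eps n = coord e n x" for n
      proof -
        have "\<bar>coord e n x\<bar> = eps n" using hx by simp
        then show ?thesis unfolding \<theta>_def by (cases "coord e n x \<ge> 0") auto
      qed
      then have "x = sig \<theta>" unfolding sig_def using sums_unique[OF coord_sums[OF B, of x]] by simp
      with th show "x \<in> sig ` S" by blast
    qed
    show "sig ` S \<subseteq> {x. extreme_pt K x}"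
    proof
      fix x assume "x \<in> sig ` S"
      then obtain \<theta> where th: "\<theta> \<in> S" "x = sig \<theta>" by blast
      have "\<forall>n. \<bar>coord e n x\<bar> = eps n" using csig[OF th(1)] absth[OF th(1)] th(2) by simp
      then show "x \<in> {x. extreme_pt K x}"
        using ext_char[OF B ne eps0] sigK[OF th(1)] th(2) unfolding K_def by blast
    qed
  qed
  obtain R where R: "\<forall>x\<in>K. norm x \<le> R"
    using compact_imp_bounded[OF cpt] bounded_iff unfolding K_def by auto
  define E where "E = (SUP \<theta>\<in>S. ereal (norm (sig \<theta>)))"
  have one: "(\<lambda>_. 1) \<in> S" by (simp add: S_def)
  have E_le: "E \<le> ereal R" unfolding E_def by (rule SUP_least) (use R sigK in auto)
  have "ereal 0 \<le> ereal (norm (sig (\<lambda>_. 1)))" by simp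
  also have "\<dots> \<le> E" unfolding E_def by (rule SUP_upper[OF one])
  finally have E_ge: "ereal 0 \<le> E" .
  obtain r where Er: "E = ereal r" using E_le E_ge by (cases E) auto
  have sig_le: "norm (sig \<theta>) \<le> r" if "\<theta> \<in> S" for \<theta>
  proof -
    have "ereal (norm (sig \<theta>)) \<le> E" unfolding E_def by (rule SUP_upper[OF that])
    then show ?thesis using Er by simp
  qed
  have Kle: "norm x \<le> r" if "x \<in> K" for x
  proof -
    have Mb: "\<forall>\<theta>. (\<forall>n. \<theta> n = 1 \<or> \<theta> n = -1) \<longrightarrow> norm (suminf (\<lambda>n. (\<theta> n * eps n) *\<^sub>R e n)) \<le> r"
      using sig_le by (auto simp: S_def sig_def)
    have xc: "\<bar>coord e n x\<bar> \<le> eps n" for n using that by (simp add: K_def brick_def)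
    define cN where "cN N n = (if n < N then coord e n x else eps n)" for N n
    have bN: "norm (suminf (\<lambda>n. cN N n *\<^sub>R e n)) \<le> r" for N
      by (rule cvx_bound[OF B eps0 cpt Mb, where N=N]) (auto simp: cN_def xc eps0 abs_of_nonneg)
    have s1: "summable (\<lambda>n. eps n *\<^sub>R e n)"
      by (rule series_summable[OF B eps0 cpt]) (simp add: eps0 abs_of_nonneg)
    have eqN: "suminf (\<lambda>n. cN N n *\<^sub>R e n) = suminf (\<lambda>n. eps n *\<^sub>R e n) +
        ((\<Sum>n<N. coord e n x *\<^sub>R e n) - (\<Sum>n<N. eps n *\<^sub>R e n))" for N
    proof -
      have "(\<lambda>n. cN N n *\<^sub>R e n) = (\<lambda>n. eps n *\<^sub>R e n +
           (if n \<in> {..<N} then (coord e n x - eps n) *\<^sub>R e n else 0))"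
        by (auto simp: cN_def fun_eq_iff scaleR_diff_left)
      moreover have "(\<lambda>n. eps n *\<^sub>R e n + (if n \<in> {..<N} then (coord e n x - eps n) *\<^sub>R e n else 0))
         sums (suminf (\<lambda>n. eps n *\<^sub>R e n) + (\<Sum>n\<in>{..<N}. (coord e n x - eps n) *\<^sub>R e n))"
        by (intro sums_add summable_sums s1 sums_If_finite_set) simp
      ultimately have "suminf (\<lambda>n. cN N n *\<^sub>R e n) =
          suminf (\<lambda>n. eps n *\<^sub>R e n) + (\<Sum>n\<in>{..<N}. (coord e n x - eps n) *\<^sub>R e n)"
        using sums_unique by metis
      then show ?thesis by (simp add: scaleR_diff_left sum_subtractf)
    qed
    have "(\<lambda>N. suminf (\<lambda>n. cN N n *\<^sub>R e n)) \<longlonglongrightarrow>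
        suminf (\<lambda>n. eps n *\<^sub>R e n) + (x - suminf (\<lambda>n. eps n *\<^sub>R e n))"
      unfolding eqN
      by (intro tendsto_add tendsto_const tendsto_diff)
         (use coord_sums[OF B, of x] summable_LIMSEQ[OF s1] in \<open>auto simp: sums_def\<close>)
    then have "(\<lambda>N. suminf (\<lambda>n. cN N n *\<^sub>R e n)) \<longlonglongrightarrow> x" by simp
    then show ?thesis using LIMSEQ_le_const2[OF tendsto_norm] bN by blast
  qed
  have unc: "r_unc e eps = E" unfolding r_unc_def E_def sig_def
    by (rule SUP_cong[OF S_def[symmetric]]) (use summ in auto)
  have "\<exists>x. extreme_pt K x" using extset one by blast
  then have ext: "r_ext K = E"
    unfolding r_ext_def E_def extset by (simp add: image_comp)
  have supK: "(SUP x\<in>K. ereal (norm x)) = E"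
  proof (rule antisym)
    show "(SUP x\<in>K. ereal (norm x)) \<le> E" unfolding Er by (rule SUP_least) (simp add: Kle)
    have "E = (SUP x\<in>sig ` S. ereal (norm x))" unfolding E_def by (simp add: image_comp)
    also have "\<dots> \<le> (SUP x\<in>K. ereal (norm x))" by (rule SUP_subset_mono) (use sigK in auto)
    finally show "E \<le> (SUP x\<in>K. ereal (norm x))" .
  qed
  show ?thesis using ext unc supK unfolding K_def Er by (intro exI[of _ r]) simp
qed

end
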